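(* Let $P_o^*(k,l)\subset P(k,l)$ be the set of pairings $p\in P(k,l)$ (all blocks of size 2) such that every block of $p$ crosses an even number of other blocks of $p$. Then $P_o^*$ is a full category of partitions.
   Context: $P(k,l)$ is the set of partitions of a set of $k$ upper points labelled $1,\dots,k$ (top row) and $l$ lower points labelled $1,\dots,l$ (bottom row). Two blocks $\{a,b\}$ and $\{c,d\}$ of a pairing cross if, listing the points in the cyclic order upper $1,\dots,k$ then lower $l,\dots,1$ and writing $a<b$, $c<d$ in this order, one has $a<c<b<d$ or $c<a<d<b$ (equivalently, the parity of the number of crossings of each string in a drawing of the pairing in the strip between the rows, which does not depend on the drawing). Tensor product $p\otimes q$: place $q$ to the right of $p$. Composition: for $p\in P(m,l)$, $q\in P(k,m)$, $pq\in P(k,l)$ places $q$ above $p$, identifies the lower points of $q$ with the upper points of $p$, merges blocks connected through these middle points, and deletes the middle points and all blocks consisting only of middle points. Involution $p^*\in P(l,k)$: upside-down reflection. A full category of partitions is a family of subsets $P_x(k,l)\subset P(k,l)$ stable under tensor product, composition and involution, and containing $|\in P(1,1)$ (one block joining the upper and the lower point) and $\sqcap\in P(0,2)$ (one block with both lower points). *)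

theory Defs
  imports "HOL-Library.Disjoint_Sets"
begin

datatype pt = Up nat | Lo nat

definition points :: "nat \<Rightarrow> nat \<Rightarrow> pt set" where
  "points k l = Up ` {1..k} \<union> Lo ` {1..l}"

definition Part :: "nat \<Rightarrow> nat \<Rightarrow> pt set set set" where
  "Part k l = {p. partition_on (points k l) p}"

fun shift_pt :: "nat \<Rightarrow> nat \<Rightarrow> pt \<Rightarrow> pt" where
  "shift_pt k l (Up i) = Up (i + k)"
| "shift_pt k l (Lo j) = Lo (j + l)"

definition tensor :: "nat \<Rightarrow> nat \<Rightarrow> pt set set \<Rightarrow> pt set set \<Rightarrow> pt set set" where
  "tensor k l p q = p \<union> (\<lambda>B. shift_pt k l ` B) ` q"

fun flip_pt :: "pt \<Rightarrow> pt" where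
  "flip_pt (Up i) = Lo i"
| "flip_pt (Lo j) = Up j"

definition star :: "pt set set \<Rightarrow> pt set set" where
  "star p = (\<lambda>B. flip_pt ` B) ` p"

text \<open>Composition: points on three levels (top, middle, bottom).\<close>
datatype tpt = TU nat | TM nat | TL nat

fun top_emb :: "pt \<Rightarrow> tpt" where
  "top_emb (Up i) = TU i"
| "top_emb (Lo j) = TM j"

fun bot_emb :: "pt \<Rightarrow> tpt" where
  "bot_emb (Up j) = TM j"
| "bot_emb (Lo i) = TL i"

definition glued_blocks :: "pt set set \<Rightarrow> pt set set \<Rightarrow> tpt set set" where
  "glued_blocks p q = (\<lambda>B. top_emb ` B) ` q \<union> (\<lambda>B. bot_emb ` B) ` p"

definition connected_rel :: "tpt set set \<Rightarrow> (tpt \<times> tpt) set" where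
  "connected_rel bl = {(x, y). \<exists>B\<in>bl. x \<in> B \<and> y \<in> B}"

definition outer_part :: "tpt set \<Rightarrow> pt set" where
  "outer_part C = {Up i | i. TU i \<in> C} \<union> {Lo i | i. TL i \<in> C}"

text \<open>comp p q = pq for p in P(m,l), q in P(k,m): merge blocks connected through the
  middle points, delete middle points and blocks consisting only of middle points.\<close>
definition comp :: "pt set set \<Rightarrow> pt set set \<Rightarrow> pt set set" where
  "comp p q =
     (let bl = glued_blocks p q;
          R = connected_rel bl;
          classes = (\<lambda>x. R\<^sup>* `` {x}) ` (\<Union>bl)
      in outer_part ` classes - {{}})"

definition id_part :: "pt set set" where
  "id_part = {{Up 1, Lo 1}}"

definition cap_part :: "pt set set" where
  "cap_part = {{Lo 1, Lo 2}}"

definition full_category_of_partitions :: "(nat \<Rightarrow> nat \<Rightarrow> pt set set set) \<Rightarrow> bool" where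
  "full_category_of_partitions Px \<longleftrightarrow>
     (\<forall>k l. Px k l \<subseteq> Part k l) \<and>
     (\<forall>k l k' l' p q. p \<in> Px k l \<longrightarrow> q \<in> Px k' l' \<longrightarrow> tensor k l p q \<in> Px (k + k') (l + l')) \<and>
     (\<forall>k l m p q. p \<in> Px m l \<longrightarrow> q \<in> Px k m \<longrightarrow> comp p q \<in> Px k l) \<and>
     (\<forall>k l p. p \<in> Px k l \<longrightarrow> star p \<in> Px l k) \<and>
     id_part \<in> Px 1 1 \<and> cap_part \<in> Px 0 2"

text \<open>Cyclic order: upper 1..k, then lower l..1.\<close>
fun pos :: "nat \<Rightarrow> nat \<Rightarrow> pt \<Rightarrow> nat" where
  "pos k l (Up i) = i"
| "pos k l (Lo j) = k + (l + 1 - j)"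

definition crosses :: "nat \<Rightarrow> nat \<Rightarrow> pt set \<Rightarrow> pt set \<Rightarrow> bool" where
  "crosses k l B C \<longleftrightarrow> (\<exists>a b c d. B = {a, b} \<and> C = {c, d} \<and>
      pos k l a < pos k l b \<and> pos k l c < pos k l d \<and>
      ((pos k l a < pos k l c \<and> pos k l c < pos k l b \<and> pos k l b < pos k l d) \<or>
       (pos k l c < pos k l a \<and> pos k l a < pos k l d \<and> pos k l d < pos k l b)))"

definition is_pairing :: "pt set set \<Rightarrow> bool" where
  "is_pairing p \<longleftrightarrow> (\<forall>B\<in>p. card B = 2)"

definition Po_star :: "nat \<Rightarrow> nat \<Rightarrow> pt set set set" where
  "Po_star k l = {p \<in> Part k l. is_pairing p \<and>
      (\<forall>B\<in>p. even (card {C \<in> p. C \<noteq> B \<and> crosses k l B C}))}"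

end

theory Submission
  imports Defs
begin


lemma orbit_lemma:
  fixes f g :: "'a \<Rightarrow> 'a" and D :: "'a set" and x :: 'a and \<psi> :: "'a \<Rightarrow> bool" and R
  assumes fin: "finite D"
   and ff: "\<And>v. f (f v) = v" and gg: "\<And>v. g (g v) = v"
   and fD: "\<And>v. v \<in> D \<Longrightarrow> f v \<in> D" and gD: "\<And>v. v \<in> D \<Longrightarrow> g v \<in> D"
   and mv: "\<And>v. v \<in> D \<Longrightarrow> f v \<noteq> v \<or> g v \<noteq> v"
   and xD: "x \<in> D" and gx: "g x = x"
   and \<psi>f: "\<And>v. v \<in> D \<Longrightarrow> f v \<noteq> v \<Longrightarrow> \<psi> (f v) \<noteq> \<psi> v"
   and \<psi>g: "\<And>v. v \<in> D \<Longrightarrow> g v \<noteq> v \<Longrightarrow> \<psi> (g v) \<noteq> \<psi> v"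
   and R: "R = {(v,w). v \<in> D \<and> (w = v \<or> w = f v \<or> w = g v)}"
  shows "\<exists>y. y \<noteq> x \<and> {v \<in> R\<^sup>*``{x}. f v = v \<or> g v = v} = {x,y} \<and>
            (g y = y \<longrightarrow> \<psi> y \<noteq> \<psi> x) \<and> (f y = y \<longrightarrow> \<psi> y = \<psi> x)"
proof -
  define \<tau> where "\<tau> = g \<circ> f"
  have inj\<tau>: "inj \<tau>" unfolding \<tau>_def inj_def by (metis comp_apply ff gg)
  define e where "e n = (\<tau>^^n) x" for n
  have eD: "e n \<in> D" for n
    by (induction n) (auto simp: e_def \<tau>_def xD fD gD)
  have e_add: "e (i + j) = (\<tau>^^i) (e j)" for i j
    by (simp add: e_def funpow_add)
  have eSuc: "e (Suc n) = g (f (e n))" for n by (simp add: e_def \<tau>_def)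
  have "\<not> inj e"
  proof
    assume "inj e"
    moreover have "finite (range e)" using eD fin by (meson finite_subset image_subsetI)
    ultimately show False using finite_imageD infinite_UNIV_nat by blast
  qed
  then obtain i j where ij: "i < j" "e i = e j"
    unfolding inj_def by (metis linorder_neqE_nat)
  have "(\<tau>^^i) (e (j - i)) = (\<tau>^^i) x"
    using ij e_add[of i "j-i"] by (simp add: e_def)
  hence "e (j - i) = x" using inj_fn[OF inj\<tau>] by (meson injD)
  hence exN: "\<exists>n. 0 < n \<and> e n = x" using ij by (intro exI[of _ "j-i"]) auto
  define N where "N = (LEAST n. 0 < n \<and> e n = x)"
  have N0: "0 < N" and eN: "e N = x"
    using LeastI_ex[OF exN] unfolding N_def by auto
  have Nmin: "0 < n \<Longrightarrow> n < N \<Longrightarrow> e n \<noteq> x" for n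
    using not_less_Least N_def by blast
  have e_inj: "e a = e b \<Longrightarrow> a < N \<Longrightarrow> b < N \<Longrightarrow> a = b" for a b
  proof (rule ccontr)
    assume h: "e a = e b" "a < N" "b < N" "a \<noteq> b"
    { fix a b assume h: "e a = e b" "a < N" "b < N" "a < b"
      have "(\<tau>^^a) (e (b - a)) = (\<tau>^^a) x"
        using h e_add[of a "b-a"] by (simp add: e_def)
      hence "e (b - a) = x" using inj_fn[OF inj\<tau>] by (meson injD)
      moreover have "b - a < N" "0 < b - a" using h by linarith+
      ultimately have False using Nmin[of "b-a"] by auto }
    with h show False by (metis linorder_neqE_nat)
  qed
  have key1: "(\<tau>^^a) (g ((\<tau>^^a) x)) = x" for a
  proof (induction a)
    case 0 then show ?case using gx by simp
  next
    case (Suc a)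
    have "\<tau> (g (\<tau> z)) = g z" for z by (simp add: \<tau>_def gg ff)
    hence "(\<tau>^^(Suc a)) (g ((\<tau>^^(Suc a)) x)) = (\<tau>^^a) (g ((\<tau>^^a) x))"
      by (metis comp_apply funpow.simps(2) funpow_Suc_right)
    then show ?case using Suc by simp
  qed
  have fe: "f (e a) = e (N - 1 - a)" if "a < N" for a
  proof -
    have "(\<tau>^^(Suc a)) (f (e a)) = x"
      using key1[of a] by (simp add: funpow_Suc_right \<tau>_def ff e_def del: funpow.simps)
    moreover have "(\<tau>^^(Suc a)) (e (N - 1 - a)) = x"
      using e_add[of "Suc a" "N - 1 - a"] that eN by simp
    ultimately show ?thesis using inj_fn[OF inj\<tau>, of "Suc a"] by (metis injD)
  qed
  have ge: "g (e a) = e (N - a)" if "0 < a" "a < N" for a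
  proof -
    have "g (e a) = g (f (f (e a)))" by (simp add: ff)
    also have "\<dots> = e (Suc (N - 1 - a))" using eSuc fe that by simp
    also have "Suc (N - 1 - a) = N - a" using that by simp
    finally show ?thesis .
  qed
  have ge0: "g (e 0) = e 0" using gx by (simp add: e_def)
  have ffix: "f (e a) = e a \<longleftrightarrow> 2*a + 1 = N" if "a < N" for a
  proof
    assume "f (e a) = e a"
    hence "e (N - 1 - a) = e a" using fe that by simp
    hence "N - 1 - a = a" using e_inj that by simp
    thus "2*a+1 = N" using that by simp
  next
    assume "2*a+1 = N" thus "f (e a) = e a" using fe that by (metis add_diff_cancel_right' diff_diff_left mult_2)
  qed
  have gfix: "g (e a) = e a \<longleftrightarrow> a = 0 \<or> 2*a = N" if "a < N" for a
  proof (cases "a = 0")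
    case True then show ?thesis using ge0 by simp
  next
    case False
    have "g (e a) = e a \<longleftrightarrow> e (N - a) = e a" using ge False that by simp
    also have "\<dots> \<longleftrightarrow> N - a = a"
    proof
      assume "e (N - a) = e a" thus "N - a = a" using e_inj that False by simp
    qed simp
    finally show ?thesis using False that by auto
  qed
  have cls: "R\<^sup>*``{x} = e ` {..<N}"
  proof
    show "R\<^sup>*``{x} \<subseteq> e ` {..<N}"
    proof
      fix w assume "w \<in> R\<^sup>*``{x}"
      hence "(x, w) \<in> R\<^sup>*" by simp
      thus "w \<in> e ` {..<N}"
      proof (induction rule: rtrancl_induct)
        case base then show ?case using N0 by (intro image_eqI[of _ _ 0]) (auto simp: e_def)
      next
        case (step v w)
        then obtain a where a: "a < N" "v = e a" by auto
        from step(2) R have "w = v \<or> w = f v \<or> w = g v" by auto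
        then show ?case
        proof (elim disjE)
          assume "w = f v" thus ?thesis using fe a N0 by auto
        next
          assume "w = g v" thus ?thesis using ge ge0 a by (cases "a = 0") auto
        qed (use a in auto)
      qed
    qed
  next
    have "e a \<in> R\<^sup>*``{x}" for a
    proof (induction a)
      case 0 then show ?case by (simp add: e_def)
    next
      case (Suc a)
      have "(e a, f (e a)) \<in> R" "(f (e a), g (f (e a))) \<in> R"
        using R eD fD by auto
      then show ?case using Suc eSuc
        by (metis (no_types, lifting) Image_singleton_iff rtrancl.rtrancl_into_rtrancl)
    qed
    thus "e ` {..<N} \<subseteq> R\<^sup>*``{x}" by auto
  qed
  have x0: "x = e 0" by (simp add: e_def)
  have N1: "N \<noteq> 1"
  proof
    assume "N = 1"
    hence "f x = x" using ffix[of 0] x0 by simp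
    thus False using mv[OF xD] gx by simp
  qed
  define a where "a = N div 2"
  have aN: "a < N" "0 < a" using N0 N1 unfolding a_def by auto
  define y where "y = e a"
  have yx: "y \<noteq> x" using e_inj[of a 0] aN x0 y_def N0 by auto
  have fixset: "{v \<in> R\<^sup>*``{x}. f v = v \<or> g v = v} = {x,y}"
  proof -
    have "{v \<in> e ` {..<N}. f v = v \<or> g v = v} = e ` {b. b < N \<and> (2*b+1 = N \<or> b = 0 \<or> 2*b = N)}"
      using ffix gfix by auto
    also have "{b. b < N \<and> (2*b+1 = N \<or> b = 0 \<or> 2*b = N)} = {0, a}"
      using N0 N1 unfolding a_def by auto
    finally show ?thesis using cls x0 y_def by simp
  qed
  have par: "2*b < N \<Longrightarrow> \<psi> (e b) = \<psi> x" for b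
  proof (induction b)
    case 0 then show ?case by (simp add: x0)
  next
    case (Suc b)
    have b: "b < N" "2*b+1 \<noteq> N" "2*b + 2 \<noteq> N" "Suc b < N" using Suc.prems by auto
    have "f (e b) \<noteq> e b" using ffix b by simp
    hence 1: "\<psi> (f (e b)) \<noteq> \<psi> (e b)" using \<psi>f eD by blast
    have fb: "f (e b) = e (N - 1 - b)" using fe b by simp
    have "g (e (N - 1 - b)) \<noteq> e (N - 1 - b)" using gfix[of "N - 1 - b"] b by auto
    hence 2: "\<psi> (g (f (e b))) \<noteq> \<psi> (f (e b))" using \<psi>g eD fb by metis
    from 1 2 Suc show ?case by (simp add: eSuc)
  qed
  show ?thesis
  proof (intro exI[of _ y] conjI impI)
    show "y \<noteq> x" by (rule yx)
    show "{v \<in> R\<^sup>*``{x}. f v = v \<or> g v = v} = {x,y}" by (rule fixset)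
  next
    assume gy: "g y = y"
    hence ev: "2*a = N" using gfix aN y_def by simp
    have "\<psi> (e (a - 1)) = \<psi> x" using par[of "a-1"] ev aN by simp
    moreover have "f (e (a - 1)) = y" using fe[of "a-1"] aN ev y_def
      by (metis Suc_diff_1 Suc_pred' add_diff_cancel_left' diff_less mult_2 zero_less_one
          diff_diff_left less_imp_diff_less plus_1_eq_Suc)
    moreover have "f (e (a - 1)) \<noteq> e (a - 1)" using ffix[of "a-1"] aN ev by simp
    ultimately show "\<psi> y \<noteq> \<psi> x" using \<psi>f eD by metis
  next
    assume fy: "f y = y"
    hence "2*a+1 = N" using ffix aN y_def by simp
    thus "\<psi> y = \<psi> x" using par[of a] y_def by simp
  qed
qed



definition par_ok :: "nat \<Rightarrow> nat \<Rightarrow> pt set set \<Rightarrow> bool" where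
  "par_ok k l p \<longleftrightarrow> (\<forall>B\<in>p. \<forall>a\<in>B. \<forall>b\<in>B. a \<noteq> b \<longrightarrow> odd (pos k l a + pos k l b))"

lemma points_Up[simp]: "Up i \<in> points k l \<longleftrightarrow> 1 \<le> i \<and> i \<le> k"
  by (auto simp: points_def)
lemma points_Lo[simp]: "Lo i \<in> points k l \<longleftrightarrow> 1 \<le> i \<and> i \<le> l"
  by (auto simp: points_def)

lemma finite_points[simp]: "finite (points k l)"
  by (simp add: points_def)

lemma pos_range: "z \<in> points k l \<Longrightarrow> 1 \<le> pos k l z \<and> pos k l z \<le> k + l"
  by (cases z) auto

lemma pos_inj: "inj_on (pos k l) (points k l)"
  unfolding inj_on_def
proof (intro ballI impI)
  fix x y assume "x \<in> points k l" "y \<in> points k l" "pos k l x = pos k l y"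
  thus "x = y" by (cases x; cases y) auto
qed

lemma pos_surj: "1 \<le> n \<Longrightarrow> n \<le> k + l \<Longrightarrow> \<exists>z\<in>points k l. pos k l z = n"
proof -
  assume h: "1 \<le> n" "n \<le> k + l"
  show ?thesis
  proof (cases "n \<le> k")
    case True thus ?thesis using h by (intro bexI[of _ "Up n"]) auto
  next
    case False thus ?thesis using h by (intro bexI[of _ "Lo (k + l + 1 - n)"]) auto
  qed
qed

lemma crosses_iff:
  assumes "a \<in> points k l" "b \<in> points k l" "c \<in> points k l" "d \<in> points k l"
    and "c \<noteq> d" "c \<notin> {a,b}" "d \<notin> {a,b}" "pos k l a < pos k l b"
  shows "crosses k l {a,b} {c,d} \<longleftrightarrow>
     ((pos k l a < pos k l c \<and> pos k l c < pos k l b) \<noteq> (pos k l a < pos k l d \<and> pos k l d < pos k l b))"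
proof -
  have ne: "pos k l c \<noteq> pos k l a" "pos k l c \<noteq> pos k l b" "pos k l d \<noteq> pos k l a"
       "pos k l d \<noteq> pos k l b" "pos k l c \<noteq> pos k l d"
    using assms pos_inj[of k l] unfolding inj_on_def by blast+
  show ?thesis
  proof
    assume "crosses k l {a,b} {c,d}"
    then obtain a' b' c' d' where h: "{a,b} = {a',b'}" "{c,d} = {c',d'}"
      "pos k l a' < pos k l b'" "pos k l c' < pos k l d'"
      "(pos k l a' < pos k l c' \<and> pos k l c' < pos k l b' \<and> pos k l b' < pos k l d') \<or>
       (pos k l c' < pos k l a' \<and> pos k l a' < pos k l d' \<and> pos k l d' < pos k l b')"
      unfolding crosses_def by blast
    have "a' = a \<and> b' = b" using h(1,3) assms(8) by (auto simp: doubleton_eq_iff)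
    moreover have "(c' = c \<and> d' = d) \<or> (c' = d \<and> d' = c)" using h(2) by (auto simp: doubleton_eq_iff)
    ultimately show "((pos k l a < pos k l c \<and> pos k l c < pos k l b) \<noteq> (pos k l a < pos k l d \<and> pos k l d < pos k l b))"
      using h(3-5) ne by auto
  next
    assume h: "((pos k l a < pos k l c \<and> pos k l c < pos k l b) \<noteq> (pos k l a < pos k l d \<and> pos k l d < pos k l b))"
    show "crosses k l {a,b} {c,d}"
    proof (cases "pos k l c < pos k l d")
      case True
      show ?thesis unfolding crosses_def
        by (rule exI[of _ a], rule exI[of _ b], rule exI[of _ c], rule exI[of _ d]) (use h True ne assms(8) in auto)
    next
      case False
      show ?thesis unfolding crosses_def
        by (rule exI[of _ a], rule exI[of _ b], rule exI[of _ d], rule exI[of _ c]) (use h False ne assms(8) in auto)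
    qed
  qed
qed

lemma finite_Part: "p \<in> Part k l \<Longrightarrow> finite p"
proof -
  assume "p \<in> Part k l"
  hence "p \<subseteq> Pow (points k l)" unfolding Part_def partition_on_def by auto
  thus "finite p" by (meson finite_Pow_iff finite_points finite_subset)
qed

lemma cross_count:
  assumes P: "p \<in> Part k l" and pair: "is_pairing p" and B: "B \<in> p" "B = {a,b}"
    and ab: "pos k l a < pos k l b"
  shows "even (card {C \<in> p. C \<noteq> B \<and> crosses k l B C}) \<longleftrightarrow> odd (pos k l a + pos k l b)"
proof -
  have part: "partition_on (points k l) p" using P by (simp add: Part_def)
  have U: "\<Union>p = points k l" using part by (simp add: partition_on_def)
  have dj: "disjoint p" using part by (simp add: partition_on_def)
  have fp: "finite p" using finite_Part[OF P] .
  have abP: "a \<in> points k l" "b \<in> points k l" using B U by auto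
  define I where "I = {z \<in> points k l. pos k l a < pos k l z \<and> pos k l z < pos k l b}"
  have "pos k l ` I = {pos k l a<..<pos k l b}"
  proof
    show "pos k l ` I \<subseteq> {pos k l a<..<pos k l b}" unfolding I_def by auto
  next
    show "{pos k l a<..<pos k l b} \<subseteq> pos k l ` I"
    proof
      fix n assume n: "n \<in> {pos k l a<..<pos k l b}"
      hence "1 \<le> n" "n \<le> k + l" using pos_range[OF abP(1)] pos_range[OF abP(2)] by auto
      then obtain z where "z \<in> points k l" "pos k l z = n" using pos_surj by blast
      thus "n \<in> pos k l ` I" using n unfolding I_def by auto
    qed
  qed
  moreover have "inj_on (pos k l) I" using pos_inj by (rule inj_on_subset) (auto simp: I_def)
  ultimately have cardI: "card I = pos k l b - Suc (pos k l a)"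
    by (metis card_image card_greaterThanLessThan)
  have IB: "I \<inter> B = {}" using B ab unfolding I_def by auto
  have I_U: "I = (\<Union>C\<in>p - {B}. C \<inter> I)"
  proof
    show "I \<subseteq> (\<Union>C\<in>p - {B}. C \<inter> I)"
    proof
      fix z assume z: "z \<in> I"
      then obtain C where "C \<in> p" "z \<in> C" using U unfolding I_def by auto
      thus "z \<in> (\<Union>C\<in>p - {B}. C \<inter> I)" using z IB by auto
    qed
  qed auto
  have "card I = (\<Sum>C\<in>p - {B}. card (C \<inter> I))"
    apply (subst I_U)
    apply (rule card_UN_disjoint)
    using fp apply simp
    apply (simp add: I_def)
    using dj unfolding pairwise_def disjnt_def by auto
  hence evI: "even (card I) \<longleftrightarrow> even (card {C \<in> p - {B}. odd (card (C \<inter> I))})"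
    using even_sum_iff fp by (metis finite_Diff)
  have cc: "(C \<noteq> B \<and> odd (card (C \<inter> I))) = (C \<noteq> B \<and> crosses k l B C)" if C: "C \<in> p" for C
  proof (cases "C = B")
    case True then show ?thesis by simp
  next
    case False
    have "card C = 2" using pair C unfolding is_pairing_def by auto
    then obtain c d where cd: "C = {c,d}" "c \<noteq> d" by (meson card_2_iff)
    have "C \<inter> B = {}" using dj C B(1) False unfolding pairwise_def disjnt_def by auto
    hence cdB: "c \<notin> {a,b}" "d \<notin> {a,b}" using cd B by auto
    have cdP: "c \<in> points k l" "d \<in> points k l" using cd C U by auto
    have "C \<inter> I = (if c \<in> I then {c} else {}) \<union> (if d \<in> I then {d} else {})"
      using cd by auto
    hence "odd (card (C \<inter> I)) \<longleftrightarrow> (c \<in> I) \<noteq> (d \<in> I)" using cd(2) by auto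
    also have "\<dots> \<longleftrightarrow> crosses k l B C"
      using crosses_iff[OF abP cdP cd(2) cdB ab] cd B cdP unfolding I_def by auto
    finally show ?thesis using False by auto
  qed
  have "{C \<in> p - {B}. odd (card (C \<inter> I))} = {C \<in> p. C \<noteq> B \<and> crosses k l B C}"
    using cc by blast
  with evI cardI ab show ?thesis by auto
qed

lemma Po_star_alt: "Po_star k l = {p \<in> Part k l. is_pairing p \<and> par_ok k l p}"
proof -
  have "(\<forall>B\<in>p. even (card {C \<in> p. C \<noteq> B \<and> crosses k l B C})) \<longleftrightarrow> par_ok k l p"
    if P: "p \<in> Part k l" and pair: "is_pairing p" for p
  proof -
    have U: "\<Union>p = points k l" using P by (simp add: Part_def partition_on_def)
    have "even (card {C \<in> p. C \<noteq> B \<and> crosses k l B C}) \<longleftrightarrow>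
          (\<forall>a\<in>B. \<forall>b\<in>B. a \<noteq> b \<longrightarrow> odd (pos k l a + pos k l b))" if B: "B \<in> p" for B
    proof -
      have "card B = 2" using pair B unfolding is_pairing_def by auto
      then obtain a b where ab: "B = {a,b}" "a \<noteq> b" by (meson card_2_iff)
      have abP: "a \<in> points k l" "b \<in> points k l" using U B ab by auto
      have "pos k l a \<noteq> pos k l b" using pos_inj[of k l] abP ab unfolding inj_on_def by blast
      hence "pos k l a < pos k l b \<or> pos k l b < pos k l a" by auto
      thus ?thesis
      proof
        assume lt: "pos k l a < pos k l b"
        show ?thesis using cross_count[OF P pair B ab(1) lt] ab by (auto simp: add.commute)
      next
        assume lt: "pos k l b < pos k l a"
        have B': "B = {b,a}" using ab by auto
        show ?thesis using cross_count[OF P pair B B' lt] ab by (auto simp: add.commute)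
      qed
    qed
    thus ?thesis unfolding par_ok_def by auto
  qed
  thus ?thesis unfolding Po_star_def by blast
qed



lemma card_points: "card (points k l) = k + l"
proof -
  have "card (Up ` {1..k} \<union> Lo ` {1..l}) = card (Up ` {1..k}) + card (Lo ` {1..l})"
    by (rule card_Un_disjoint) auto
  also have "\<dots> = k + l" by (simp add: card_image inj_on_def)
  finally show ?thesis by (simp add: points_def)
qed

lemma pairing_even:
  assumes P: "p \<in> Part k l" and pair: "is_pairing p"
  shows "even (k + l)"
proof -
  have part: "partition_on (points k l) p" using P by (simp add: Part_def)
  have fp: "finite p" using finite_Part[OF P] .
  have finA: "finite A" if "A \<in> p" for A
    using part that unfolding partition_on_def by (metis Union_upper finite_points finite_subset)
  have "card (\<Union>p) = sum card p"
    using part finA unfolding partition_on_def by (intro card_Union_disjoint) auto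
  also have "\<dots> = sum (\<lambda>_. 2) p" using pair unfolding is_pairing_def by (intro sum.cong) auto
  also have "\<dots> = 2 * card p" by simp
  finally show ?thesis using part card_points unfolding partition_on_def by (metis dvd_triv_left)
qed

lemma inj_shift: "inj (shift_pt k l)"
proof (rule injI)
  fix x y assume "shift_pt k l x = shift_pt k l y" thus "x = y" by (cases x; cases y) auto
qed

lemma inj_flip: "inj flip_pt"
proof (rule injI)
  fix x y assume "flip_pt x = flip_pt y" thus "x = y" by (cases x; cases y) auto
qed

lemma pos_tensor1: "a \<in> points k l \<Longrightarrow>
  pos (k+k') (l+l') a = pos k l a + (case a of Up _ \<Rightarrow> 0 | Lo _ \<Rightarrow> k' + l')"
  by (cases a) auto

lemma pos_tensor2: "a \<in> points k' l' \<Longrightarrow> pos (k+k') (l+l') (shift_pt k l a) = pos k' l' a + k"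
  by (cases a) auto

lemma shift_points: "shift_pt k l ` points k' l' = {z \<in> points (k+k') (l+l'). z \<notin> points k l}"
proof
  show "shift_pt k l ` points k' l' \<subseteq> {z \<in> points (k+k') (l+l'). z \<notin> points k l}"
  proof
    fix z assume "z \<in> shift_pt k l ` points k' l'"
    then obtain a where "a \<in> points k' l'" "z = shift_pt k l a" by auto
    thus "z \<in> {z \<in> points (k+k') (l+l'). z \<notin> points k l}" by (cases a) auto
  qed
next
  show "{z \<in> points (k+k') (l+l'). z \<notin> points k l} \<subseteq> shift_pt k l ` points k' l'"
  proof
    fix z assume z: "z \<in> {z \<in> points (k+k') (l+l'). z \<notin> points k l}"
    show "z \<in> shift_pt k l ` points k' l'"
    proof (cases z)
      case (Up i) thus ?thesis using z by (intro image_eqI[of _ _ "Up (i - k)"]) auto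
    next
      case (Lo i) thus ?thesis using z by (intro image_eqI[of _ _ "Lo (i - l)"]) auto
    qed
  qed
qed

lemma points_mono: "points k l \<subseteq> points (k+k') (l+l')"
proof
  fix z assume "z \<in> points k l" thus "z \<in> points (k+k') (l+l')" by (cases z) auto
qed

lemma partition_on_inj_img:
  assumes "partition_on A P" "inj f"
  shows "partition_on (f ` A) ((`) f ` P)"
proof -
  have "partition_on (f ` A) ((`) f ` P - {{}})"
    by (rule partition_on_inj_image[OF assms(1)]) (use assms(2) in \<open>auto intro: inj_on_subset\<close>)
  moreover have "(`) f ` P - {{}} = (`) f ` P" using assms(1) unfolding partition_on_def by auto
  ultimately show ?thesis by simp
qed

lemma tensor_ok:
  assumes p: "p \<in> Po_star k l" and q: "q \<in> Po_star k' l'"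
  shows "tensor k l p q \<in> Po_star (k + k') (l + l')"
proof -
  have pP: "p \<in> Part k l" "is_pairing p" "par_ok k l p" using p by (auto simp: Po_star_alt)
  have qP: "q \<in> Part k' l'" "is_pairing q" "par_ok k' l' q" using q by (auto simp: Po_star_alt)
  have ev: "even (k' + l')" using pairing_even qP by blast
  let ?s = "shift_pt k l"
  let ?Q = "(`) ?s ` q"
  have partp: "partition_on (points k l) p" using pP by (simp add: Part_def)
  have partQ: "partition_on (?s ` points k' l') ?Q"
    using partition_on_inj_img[OF _ inj_shift] qP by (simp add: Part_def)
  have "partition_on (points k l \<union> ?s ` points k' l') (p \<union> ?Q)"
    unfolding partition_on_def
  proof (intro conjI)
    have "\<Union>p = points k l" "\<Union>?Q = ?s ` points k' l'"
      using partition_onD1[OF partp, symmetric] partition_onD1[OF partQ, symmetric] by simp_all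
    thus "\<Union>(p \<union> ?Q) = points k l \<union> ?s ` points k' l'" by (simp add: Union_Un_distrib)
    show "disjoint (p \<union> ?Q)"
    proof (rule disjoint_union)
      show "disjoint p" using partp by (simp add: partition_on_def)
      show "disjoint ?Q" using partQ by (simp add: partition_on_def)
      have "\<Union>p = points k l" "\<Union>?Q = ?s ` points k' l'"
        using partition_onD1[OF partp, symmetric] partition_onD1[OF partQ, symmetric] by simp_all
      thus "\<Union>p \<inter> \<Union>?Q = {}" using shift_points[of k l k' l'] by blast
    qed
    show "{} \<notin> p \<union> ?Q" using partp partQ partition_onD3 by blast
  qed
  moreover have "points k l \<union> ?s ` points k' l' = points (k+k') (l+l')"
    using shift_points[of k l k' l'] points_mono[of k l k' l'] by blast
  ultimately have part: "tensor k l p q \<in> Part (k+k') (l+l')" by (simp add: Part_def tensor_def)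
  have pair: "is_pairing (tensor k l p q)"
    using pP(2) qP(2) unfolding is_pairing_def tensor_def
    by (auto simp: card_image inj_shift[THEN inj_on_subset])
  have par: "par_ok (k+k') (l+l') (tensor k l p q)"
    unfolding par_ok_def tensor_def
  proof (intro ballI impI)
    fix B a b assume B: "B \<in> p \<union> ?Q" and ab: "a \<in> B" "b \<in> B" "a \<noteq> b"
    show "odd (pos (k+k') (l+l') a + pos (k+k') (l+l') b)"
    proof (cases "B \<in> p")
      case True
      have abP: "a \<in> points k l" "b \<in> points k l" using partp True ab unfolding partition_on_def by auto
      have "odd (pos k l a + pos k l b)" using pP(3) True ab unfolding par_ok_def by blast
      moreover have "even (case a of Up _ \<Rightarrow> 0 | Lo _ \<Rightarrow> k' + l')" using ev by (cases a) auto
      moreover have "even (case b of Up _ \<Rightarrow> 0 | Lo _ \<Rightarrow> k' + l')" using ev by (cases b) auto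
      moreover have "pos (k+k') (l+l') a + pos (k+k') (l+l') b = (pos k l a + pos k l b) +
         ((case a of Up _ \<Rightarrow> 0 | Lo _ \<Rightarrow> k' + l') + (case b of Up _ \<Rightarrow> 0 | Lo _ \<Rightarrow> k' + l'))"
        unfolding pos_tensor1[OF abP(1)] pos_tensor1[OF abP(2)] by simp
      ultimately show ?thesis by (simp only: even_add) simp
    next
      case False
      then obtain B0 where B0: "B0 \<in> q" "B = ?s ` B0" using B by auto
      then obtain a0 b0 where "a0 \<in> B0" "b0 \<in> B0" "a = ?s a0" "b = ?s b0" using ab by auto
      moreover have "a0 \<in> points k' l'" "b0 \<in> points k' l'" using B0 calculation qP(1)
        unfolding Part_def partition_on_def by auto
      moreover have "a0 \<noteq> b0" using calculation ab by auto
      ultimately have ab0: "a0 \<in> B0" "b0 \<in> B0" "a = ?s a0" "b = ?s b0" "a0 \<in> points k' l'"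
        "b0 \<in> points k' l'" "a0 \<noteq> b0" by auto
      have o: "odd (pos k' l' a0 + pos k' l' b0)" using qP(3) B0(1) ab0 unfolding par_ok_def by blast
      have "pos (k+k') (l+l') a + pos (k+k') (l+l') b = (pos k' l' a0 + pos k' l' b0) + 2 * k"
        using pos_tensor2[OF ab0(5), of k l] pos_tensor2[OF ab0(6), of k l] ab0(3,4) by simp
      thus ?thesis using o by simp
    qed
  qed
  show ?thesis using part pair par by (simp add: Po_star_alt)
qed

lemma flip_points: "flip_pt ` points k l = points l k"
proof
  show "flip_pt ` points k l \<subseteq> points l k"
  proof
    fix z assume "z \<in> flip_pt ` points k l"
    then obtain a where "a \<in> points k l" "z = flip_pt a" by auto
    thus "z \<in> points l k" by (cases a) auto
  qed
next
  show "points l k \<subseteq> flip_pt ` points k l"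
  proof
    fix z assume z: "z \<in> points l k"
    show "z \<in> flip_pt ` points k l"
    proof (cases z)
      case (Up i) thus ?thesis using z by (intro image_eqI[of _ _ "Lo i"]) auto
    next
      case (Lo i) thus ?thesis using z by (intro image_eqI[of _ _ "Up i"]) auto
    qed
  qed
qed

lemma pos_flip: "a \<in> points k l \<Longrightarrow> pos l k (flip_pt a) + pos k l a = k + l + 1"
  by (cases a) auto

lemma star_ok:
  assumes p: "p \<in> Po_star k l"
  shows "star p \<in> Po_star l k"
proof -
  have pP: "p \<in> Part k l" "is_pairing p" "par_ok k l p" using p by (auto simp: Po_star_alt)
  have partp: "partition_on (points k l) p" using pP by (simp add: Part_def)
  have part: "star p \<in> Part l k"
    using partition_on_inj_img[OF partp inj_flip] flip_points by (simp add: Part_def star_def)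
  have pair: "is_pairing (star p)"
    using pP(2) unfolding is_pairing_def star_def
    by (auto simp: card_image inj_flip[THEN inj_on_subset])
  have par: "par_ok l k (star p)"
    unfolding par_ok_def star_def
  proof (intro ballI impI)
    fix B a b assume B: "B \<in> (`) flip_pt ` p" and ab: "a \<in> B" "b \<in> B" "a \<noteq> b"
    then obtain B0 where B0: "B0 \<in> p" "B = flip_pt ` B0" using B by auto
    then obtain a0 b0 where "a0 \<in> B0" "b0 \<in> B0" "a = flip_pt a0" "b = flip_pt b0" using ab by auto
    moreover have "a0 \<in> points k l" "b0 \<in> points k l" using B0 calculation partp
      unfolding partition_on_def by auto
    moreover have "a0 \<noteq> b0" using calculation ab by auto
    ultimately have ab0: "a0 \<in> points k l" "b0 \<in> points k l" "a = flip_pt a0" "b = flip_pt b0"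
      "a0 \<in> B0" "b0 \<in> B0" "a0 \<noteq> b0" by auto
    have o: "odd (pos k l a0 + pos k l b0)" using pP(3) B0(1) ab0(5-7) unfolding par_ok_def by blast
    have e1: "pos l k a + pos k l a0 = k + l + 1" using pos_flip[OF ab0(1)] ab0(3) by simp
    have e2: "pos l k b + pos k l b0 = k + l + 1" using pos_flip[OF ab0(2)] ab0(4) by simp
    have "(pos l k a + pos l k b) + (pos k l a0 + pos k l b0) = (pos l k a + pos k l a0) + (pos l k b + pos k l b0)" by (simp add: algebra_simps)
    also have "\<dots> = 2 * (k + l + 1)" using e1 e2 by simp
    finally have "(pos l k a + pos l k b) + (pos k l a0 + pos k l b0) = 2 * (k + l + 1)" .
    hence "even ((pos l k a + pos l k b) + (pos k l a0 + pos k l b0))" by (metis dvd_triv_left)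
    thus "odd (pos l k a + pos l k b)" using o by simp
  qed
  show ?thesis using part pair par by (simp add: Po_star_alt)
qed

lemma id_ok: "id_part \<in> Po_star 1 1"
  unfolding Po_star_alt Part_def id_part_def is_pairing_def par_ok_def
  by (auto simp: partition_on_def points_def)

lemma cap_ok: "cap_part \<in> Po_star 0 2"
  unfolding Po_star_alt Part_def cap_part_def is_pairing_def par_ok_def
  by (auto simp: partition_on_def points_def)



definition partner :: "'a set set \<Rightarrow> 'a \<Rightarrow> 'a" where
  "partner bs v = (if \<exists>B\<in>bs. v \<in> B then (SOME w. \<exists>B\<in>bs. v \<in> B \<and> w \<in> B \<and> w \<noteq> v) else v)"

lemma partner_block:
  assumes dj: "disjoint bs" and c2: "\<And>B. B \<in> bs \<Longrightarrow> card B = 2" and B: "B \<in> bs" "v \<in> B"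
  shows "B = {v, partner bs v} \<and> partner bs v \<noteq> v"
proof -
  obtain x y where xy: "B = {x,y}" "x \<noteq> y" using c2[OF B(1)] by (meson card_2_iff)
  have "(B = {v,y} \<and> y \<noteq> v) \<or> (B = {v,x} \<and> x \<noteq> v)" using xy B(2) by (auto simp: insert_commute)
  then obtain w where w: "B = {v,w}" "w \<noteq> v" by blast
  have ex: "\<exists>w. \<exists>B\<in>bs. v \<in> B \<and> w \<in> B \<and> w \<noteq> v" using w B by blast
  define u where "u = (SOME w. \<exists>B\<in>bs. v \<in> B \<and> w \<in> B \<and> w \<noteq> v)"
  have pu: "partner bs v = u" unfolding partner_def u_def using B by auto
  obtain B' where B': "B' \<in> bs" "v \<in> B'" "u \<in> B'" "u \<noteq> v"
    using someI_ex[OF ex] unfolding u_def by blast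
  have "B' = B" using dj B B' unfolding pairwise_def disjnt_def by blast
  hence "u = w" using B' w by auto
  thus ?thesis using w pu by simp
qed

lemma partner_out: "\<not> (\<exists>B\<in>bs. v \<in> B) \<Longrightarrow> partner bs v = v"
  unfolding partner_def by simp

lemma partner_invol:
  assumes dj: "disjoint bs" and c2: "\<And>B. B \<in> bs \<Longrightarrow> card B = 2"
  shows "partner bs (partner bs v) = v"
proof (cases "\<exists>B\<in>bs. v \<in> B")
  case True
  then obtain B where B: "B \<in> bs" "v \<in> B" by blast
  have 1: "B = {v, partner bs v}" "partner bs v \<noteq> v" using partner_block[OF dj c2 B] by auto
  hence "partner bs v \<in> B" by auto
  from partner_block[OF dj c2 B(1) this] 1 show ?thesis by (metis doubleton_eq_iff)
next
  case False thus ?thesis using partner_out by metis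
qed

lemma inj_top: "inj top_emb"
proof (rule injI)
  fix x y assume "top_emb x = top_emb y" thus "x = y" by (cases x; cases y) auto
qed

lemma inj_bot: "inj bot_emb"
proof (rule injI)
  fix x y assume "bot_emb x = bot_emb y" thus "x = y" by (cases x; cases y) auto
qed

lemma TU_top: "TU i \<in> top_emb ` A \<longleftrightarrow> Up i \<in> A"
proof
  assume "TU i \<in> top_emb ` A"
  then obtain z where "z \<in> A" "TU i = top_emb z" by auto
  thus "Up i \<in> A" by (cases z) auto
qed force
lemma TM_top: "TM i \<in> top_emb ` A \<longleftrightarrow> Lo i \<in> A"
proof
  assume "TM i \<in> top_emb ` A"
  then obtain z where "z \<in> A" "TM i = top_emb z" by auto
  thus "Lo i \<in> A" by (cases z) auto
qed force
lemma TL_top: "TL i \<notin> top_emb ` A"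
proof
  assume "TL i \<in> top_emb ` A"
  then obtain z where "z \<in> A" "TL i = top_emb z" by auto
  thus False by (cases z) auto
qed
lemma TU_bot: "TU i \<notin> bot_emb ` A"
proof
  assume "TU i \<in> bot_emb ` A"
  then obtain z where "z \<in> A" "TU i = bot_emb z" by auto
  thus False by (cases z) auto
qed
lemma TM_bot: "TM i \<in> bot_emb ` A \<longleftrightarrow> Up i \<in> A"
proof
  assume "TM i \<in> bot_emb ` A"
  then obtain z where "z \<in> A" "TM i = bot_emb z" by auto
  thus "Up i \<in> A" by (cases z) auto
qed force
lemma TL_bot: "TL i \<in> bot_emb ` A \<longleftrightarrow> Lo i \<in> A"
proof
  assume "TL i \<in> bot_emb ` A"
  then obtain z where "z \<in> A" "TL i = bot_emb z" by auto
  thus "Lo i \<in> A" by (cases z) auto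
qed force

definition ext :: "tpt \<Rightarrow> pt" where
  "ext v = (case v of TU i \<Rightarrow> Up i | TM j \<Rightarrow> Up 0 | TL i \<Rightarrow> Lo i)"

locale cset =
  fixes k m l :: nat and p q :: "pt set set"
  assumes p: "p \<in> Po_star m l" and q: "q \<in> Po_star k m"
begin

definition "Qe = (\<lambda>B. top_emb ` B) ` q"
definition "Pe = (\<lambda>B. bot_emb ` B) ` p"
definition "D = \<Union>(Qe \<union> Pe)"
definition "f = partner Qe"
definition "g = partner Pe"
definition "R = connected_rel (glued_blocks p q)"
definition "\<psi> v = (case v of TU i \<Rightarrow> odd i | TM j \<Rightarrow> odd (k + (m + 1 - j))
                   | TL i \<Rightarrow> (odd (m + (l + 1 - i)) \<noteq> odd (k + m + 1)))"

lemma pP: "p \<in> Part m l" "is_pairing p" "par_ok m l p" using p by (auto simp: Po_star_alt)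
lemma qP: "q \<in> Part k m" "is_pairing q" "par_ok k m q" using q by (auto simp: Po_star_alt)

lemma partQ: "partition_on (top_emb ` points k m) Qe"
  unfolding Qe_def using partition_on_inj_img[OF _ inj_top] qP(1) by (simp add: Part_def)
lemma partP: "partition_on (bot_emb ` points m l) Pe"
  unfolding Pe_def using partition_on_inj_img[OF _ inj_bot] pP(1) by (simp add: Part_def)

lemma djQ: "disjoint Qe" using partQ by (simp add: partition_on_def)
lemma djP: "disjoint Pe" using partP by (simp add: partition_on_def)
lemma UQ: "\<Union>Qe = top_emb ` points k m" using partition_onD1[OF partQ] by simp
lemma UP: "\<Union>Pe = bot_emb ` points m l" using partition_onD1[OF partP] by simp

lemma c2Q: "B \<in> Qe \<Longrightarrow> card B = 2"
  using qP(2) unfolding Qe_def is_pairing_def by (auto simp: card_image inj_top[THEN inj_on_subset])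
lemma c2P: "B \<in> Pe \<Longrightarrow> card B = 2"
  using pP(2) unfolding Pe_def is_pairing_def by (auto simp: card_image inj_bot[THEN inj_on_subset])

lemma D_eq: "D = top_emb ` points k m \<union> bot_emb ` points m l"
  unfolding D_def using UQ UP by (simp add: Union_Un_distrib)

lemma finD: "finite D" unfolding D_eq by simp

lemma ff: "f (f v) = v" unfolding f_def by (rule partner_invol[OF djQ c2Q])
lemma gg: "g (g v) = v" unfolding g_def by (rule partner_invol[OF djP c2P])

lemma f_in: "B \<in> Qe \<Longrightarrow> v \<in> B \<Longrightarrow> B = {v, f v} \<and> f v \<noteq> v"
  unfolding f_def by (rule partner_block[OF djQ c2Q])
lemma g_in: "B \<in> Pe \<Longrightarrow> v \<in> B \<Longrightarrow> B = {v, g v} \<and> g v \<noteq> v"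
  unfolding g_def by (rule partner_block[OF djP c2P])
lemma f_out: "v \<notin> \<Union>Qe \<Longrightarrow> f v = v"
  unfolding f_def by (rule partner_out) auto
lemma g_out: "v \<notin> \<Union>Pe \<Longrightarrow> g v = v"
  unfolding g_def by (rule partner_out) auto

lemma fD: "v \<in> D \<Longrightarrow> f v \<in> D"
proof -
  assume v: "v \<in> D"
  show "f v \<in> D"
  proof (cases "v \<in> \<Union>Qe")
    case True
    then obtain B where "B \<in> Qe" "v \<in> B" by auto
    thus ?thesis using f_in[of B v] unfolding D_def by auto
  qed (use v f_out in auto)
qed

lemma gD: "v \<in> D \<Longrightarrow> g v \<in> D"
proof -
  assume v: "v \<in> D"
  show "g v \<in> D"
  proof (cases "v \<in> \<Union>Pe")
    case True
    then obtain B where "B \<in> Pe" "v \<in> B" by auto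
    thus ?thesis using g_in[of B v] unfolding D_def by auto
  qed (use v g_out in auto)
qed

lemma f_moves: "v \<in> \<Union>Qe \<Longrightarrow> f v \<noteq> v"
  using f_in by blast
lemma g_moves: "v \<in> \<Union>Pe \<Longrightarrow> g v \<noteq> v"
  using g_in by blast

lemma mv: "v \<in> D \<Longrightarrow> f v \<noteq> v \<or> g v \<noteq> v"
  unfolding D_def using f_moves g_moves by auto

lemma R_mem: "(v, w) \<in> R \<longleftrightarrow> v \<in> D \<and> (w = v \<or> w = f v \<or> w = g v)"
proof -
  have gl: "glued_blocks p q = Qe \<union> Pe" unfolding glued_blocks_def Qe_def Pe_def by simp
  show "(v, w) \<in> R \<longleftrightarrow> v \<in> D \<and> (w = v \<or> w = f v \<or> w = g v)"
  proof
    assume "(v, w) \<in> R"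
    then obtain B where B: "B \<in> Qe \<union> Pe" "v \<in> B" "w \<in> B"
      unfolding R_def connected_rel_def gl by auto
    show "v \<in> D \<and> (w = v \<or> w = f v \<or> w = g v)"
    proof (cases "B \<in> Qe")
      case True thus ?thesis using f_in[OF True B(2)] B unfolding D_def by auto
    next
      case False
      hence "B \<in> Pe" using B by auto
      thus ?thesis using g_in[OF _ B(2)] B unfolding D_def by auto
    qed
  next
    assume h: "v \<in> D \<and> (w = v \<or> w = f v \<or> w = g v)"
    then obtain B0 where B0: "B0 \<in> Qe \<union> Pe" "v \<in> B0" unfolding D_def by auto
    have "\<exists>B\<in>Qe \<union> Pe. v \<in> B \<and> w \<in> B"
    proof -
      { assume "w = v" hence ?thesis using B0 by auto }
      moreover
      { assume w: "w = f v"
        have ?thesis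
        proof (cases "v \<in> \<Union>Qe")
          case True
          then obtain B where "B \<in> Qe" "v \<in> B" by auto
          thus ?thesis using f_in[of B v] w by auto
        next
          case False thus ?thesis using f_out w B0 by auto
        qed }
      moreover
      { assume w: "w = g v"
        have ?thesis
        proof (cases "v \<in> \<Union>Pe")
          case True
          then obtain B where "B \<in> Pe" "v \<in> B" by auto
          thus ?thesis using g_in[of B v] w by auto
        next
          case False thus ?thesis using g_out w B0 by auto
        qed }
      ultimately show ?thesis using h by blast
    qed
    thus "(v, w) \<in> R" unfolding R_def connected_rel_def gl by auto
  qed
qed

lemma R_eq: "R = {(v,w). v \<in> D \<and> (w = v \<or> w = f v \<or> w = g v)}"
  using R_mem by auto

lemma \<psi>_top: "\<psi> (top_emb z) = odd (pos k m z)"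
  by (cases z) (auto simp: \<psi>_def)

lemma \<psi>_bot: "z \<in> points m l \<Longrightarrow> \<psi> (bot_emb z) = (odd (pos m l z) \<noteq> odd (k + m + 1))"
proof (cases z)
  case (Up j)
  assume "z \<in> points m l"
  hence j: "j \<le> m" using Up by simp
  have e: "odd (k + (m + 1 - j)) = (odd j \<noteq> odd (k + m + 1))" using j by presburger
  have "\<psi> (TM j) = odd (k + (m + 1 - j))" unfolding \<psi>_def by (simp only: tpt.case)
  thus ?thesis unfolding Up using e by simp
next
  case (Lo i) thus ?thesis by (simp add: \<psi>_def)
qed

lemma \<psi>f: "v \<in> D \<Longrightarrow> f v \<noteq> v \<Longrightarrow> \<psi> (f v) \<noteq> \<psi> v"
proof -
  assume v: "v \<in> D" "f v \<noteq> v"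
  hence "v \<in> \<Union>Qe" using f_out by blast
  then obtain B where B: "B \<in> Qe" "v \<in> B" by auto
  then obtain B0 where B0: "B0 \<in> q" "B = top_emb ` B0" unfolding Qe_def by auto
  have fv: "f v \<in> B" using f_in[OF B] by auto
  obtain a b where ab: "a \<in> B0" "b \<in> B0" "v = top_emb a" "f v = top_emb b"
    using B0 B(2) fv by auto
  have "a \<noteq> b" using ab v by auto
  hence "odd (pos k m a + pos k m b)" using qP(3) B0 ab unfolding par_ok_def by blast
  thus ?thesis using ab by (simp add: \<psi>_top)
qed

lemma \<psi>g: "v \<in> D \<Longrightarrow> g v \<noteq> v \<Longrightarrow> \<psi> (g v) \<noteq> \<psi> v"
proof -
  assume v: "v \<in> D" "g v \<noteq> v"
  hence "v \<in> \<Union>Pe" using g_out by blast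
  then obtain B where B: "B \<in> Pe" "v \<in> B" by auto
  then obtain B0 where B0: "B0 \<in> p" "B = bot_emb ` B0" unfolding Pe_def by auto
  have gv: "g v \<in> B" using g_in[OF B] by auto
  obtain a b where ab: "a \<in> B0" "b \<in> B0" "v = bot_emb a" "g v = bot_emb b"
    using B0 B(2) gv by auto
  have abP: "a \<in> points m l" "b \<in> points m l"
    using pP(1) B0 ab unfolding Part_def partition_on_def by auto
  have "a \<noteq> b" using ab v by auto
  hence "odd (pos m l a + pos m l b)" using pP(3) B0 ab unfolding par_ok_def by blast
  thus ?thesis using ab by (simp add: \<psi>_bot[OF abP(1)] \<psi>_bot[OF abP(2)]) auto
qed

lemma UQ_mem: "TU i \<in> \<Union>Qe \<longleftrightarrow> 1 \<le> i \<and> i \<le> k" "TM j \<in> \<Union>Qe \<longleftrightarrow> 1 \<le> j \<and> j \<le> m"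
   "TL i \<notin> \<Union>Qe"
  unfolding UQ by (simp_all add: TU_top TM_top TL_top)
lemma UP_mem: "TU i \<notin> \<Union>Pe" "TM j \<in> \<Union>Pe \<longleftrightarrow> 1 \<le> j \<and> j \<le> m"
   "TL i \<in> \<Union>Pe \<longleftrightarrow> 1 \<le> i \<and> i \<le> l"
  unfolding UP by (simp_all add: TU_bot TM_bot TL_bot)

lemma D_mem: "TU i \<in> D \<longleftrightarrow> 1 \<le> i \<and> i \<le> k" "TM j \<in> D \<longleftrightarrow> 1 \<le> j \<and> j \<le> m"
   "TL i \<in> D \<longleftrightarrow> 1 \<le> i \<and> i \<le> l"
  unfolding D_def using UQ_mem UP_mem by (auto simp: Union_Un_distrib)

lemma gfix: "v \<in> D \<Longrightarrow> g v = v \<longleftrightarrow> (\<exists>i. v = TU i)"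
proof (cases v)
  case (TU i) thus ?thesis using g_out UP_mem by auto
next
  case (TM j)
  assume "v \<in> D" thus ?thesis using TM g_moves UP_mem D_mem by auto
next
  case (TL i)
  assume "v \<in> D" thus ?thesis using TL g_moves UP_mem D_mem by auto
qed

lemma ffix: "v \<in> D \<Longrightarrow> f v = v \<longleftrightarrow> (\<exists>i. v = TL i)"
proof (cases v)
  case (TL i) thus ?thesis using f_out UQ_mem by auto
next
  case (TM j)
  assume "v \<in> D" thus ?thesis using TM f_moves UQ_mem D_mem by auto
next
  case (TU i)
  assume "v \<in> D" thus ?thesis using TU f_moves UQ_mem D_mem by auto
qed

lemma \<psi>_TU: "\<psi> (TU i) = odd (pos k l (ext (TU i)))"
  by (simp add: \<psi>_def ext_def)

lemma \<psi>_TL: "i \<le> l \<Longrightarrow> \<psi> (TL i) = (\<not> odd (pos k l (ext (TL i))))"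
proof -
  assume i: "i \<le> l"
  define t where "t = l + 1 - i"
  have "\<psi> (TL i) = (odd (m + t) \<noteq> odd (k + m + 1))" by (simp add: \<psi>_def t_def)
  also have "\<dots> = (\<not> odd (k + t))" by auto
  finally show ?thesis by (simp add: ext_def t_def)
qed

lemma phi_g: "v \<in> D \<Longrightarrow> g v = v \<Longrightarrow> \<psi> v = odd (pos k l (ext v))"
  using gfix \<psi>_TU by auto
lemma phi_f: "v \<in> D \<Longrightarrow> f v = v \<Longrightarrow> \<psi> v = (\<not> odd (pos k l (ext v)))"
  using ffix \<psi>_TL D_mem by auto

lemma R_D: "(x, w) \<in> R\<^sup>* \<Longrightarrow> x \<in> D \<Longrightarrow> w \<in> D"
proof (induction rule: rtrancl_induct)
  case (step v w) thus ?case using R_eq fD gD by auto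
qed simp

lemma symR: "sym R"
  unfolding sym_def R_eq using fD gD ff gg by auto

lemma cls_eq: "z \<in> R\<^sup>*``{x} \<Longrightarrow> R\<^sup>*``{z} = R\<^sup>*``{x}"
proof -
  assume "z \<in> R\<^sup>*``{x}"
  hence xz: "(x,z) \<in> R\<^sup>*" by simp
  hence zx: "(z,x) \<in> R\<^sup>*" using sym_rtrancl[OF symR] unfolding sym_def by blast
  show ?thesis using xz zx by (auto intro: rtrancl_trans)
qed

lemma block:
  assumes z: "z \<in> D" "f z = z \<or> g z = z"
  shows "\<exists>y. y \<noteq> z \<and> y \<in> D \<and> {v \<in> R\<^sup>*``{z}. f v = v \<or> g v = v} = {z,y} \<and>
             odd (pos k l (ext z) + pos k l (ext y))"
proof (cases "g z = z")
  case True
  obtain y where y: "y \<noteq> z" "{v \<in> R\<^sup>*``{z}. f v = v \<or> g v = v} = {z,y}"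
    "g y = y \<longrightarrow> \<psi> y \<noteq> \<psi> z" "f y = y \<longrightarrow> \<psi> y = \<psi> z"
    using orbit_lemma[of D f g z \<psi> R, OF finD ff gg fD gD mv z(1) True \<psi>f \<psi>g R_eq] by blast
  have yin: "y \<in> R\<^sup>*``{z}" "f y = y \<or> g y = y" using y(2) by blast+
  hence yD: "y \<in> D" using R_D z(1) by auto
  have "odd (pos k l (ext z) + pos k l (ext y))"
    using yin(2) y(3,4) phi_g[OF z(1) True] phi_g[OF yD] phi_f[OF yD] by auto
  thus ?thesis using y yD by blast
next
  case False
  hence fz: "f z = z" using z by simp
  have R': "R = {(v,w). v \<in> D \<and> (w = v \<or> w = g v \<or> w = f v)}" using R_eq by auto
  obtain y where y: "y \<noteq> z" "{v \<in> R\<^sup>*``{z}. g v = v \<or> f v = v} = {z,y}"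
    "f y = y \<longrightarrow> \<psi> y \<noteq> \<psi> z" "g y = y \<longrightarrow> \<psi> y = \<psi> z"
    using orbit_lemma[of D g f z \<psi> R, OF finD gg ff gD fD _ z(1) fz \<psi>g \<psi>f R'] mv by blast
  have "{v \<in> R\<^sup>*``{z}. f v = v \<or> g v = v} = {v \<in> R\<^sup>*``{z}. g v = v \<or> f v = v}" by blast
  hence y2: "{v \<in> R\<^sup>*``{z}. f v = v \<or> g v = v} = {z,y}" using y(2) by simp
  have yin: "y \<in> R\<^sup>*``{z}" "f y = y \<or> g y = y" using y2 by blast+
  hence yD: "y \<in> D" using R_D z(1) by auto
  have "odd (pos k l (ext z) + pos k l (ext y))"
    using yin(2) y(3,4) phi_f[OF z(1) fz] phi_g[OF yD] phi_f[OF yD] by auto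
  thus ?thesis using y y2 yD by blast
qed

lemma outer_eq: "C \<subseteq> D \<Longrightarrow> outer_part C = ext ` {v \<in> C. f v = v \<or> g v = v}"
proof -
  assume C: "C \<subseteq> D"
  have 1: "Up i \<in> ext ` {v \<in> C. f v = v \<or> g v = v}" if "TU i \<in> C" for i
    using that C gfix by (intro image_eqI[of _ _ "TU i"]) (auto simp: ext_def)
  have 2: "Lo i \<in> ext ` {v \<in> C. f v = v \<or> g v = v}" if "TL i \<in> C" for i
    using that C ffix by (intro image_eqI[of _ _ "TL i"]) (auto simp: ext_def)
  have 3: "ext ` {v \<in> C. f v = v \<or> g v = v} \<subseteq> outer_part C"
  proof
    fix w assume "w \<in> ext ` {v \<in> C. f v = v \<or> g v = v}"
    then obtain v where v: "v \<in> C" "f v = v \<or> g v = v" "w = ext v" by auto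
    hence "(\<exists>i. v = TU i) \<or> (\<exists>i. v = TL i)" using C ffix gfix by blast
    thus "w \<in> outer_part C" using v unfolding outer_part_def by (auto simp: ext_def)
  qed
  show ?thesis using 1 2 3 unfolding outer_part_def by blast
qed

lemma comp_eq: "comp p q = outer_part ` ((\<lambda>x. R\<^sup>*``{x}) ` D) - {{}}"
proof -
  have gl: "glued_blocks p q = Qe \<union> Pe" unfolding glued_blocks_def Qe_def Pe_def by simp
  show ?thesis unfolding comp_def Let_def R_def D_def gl ..
qed

lemma comp_blocks:
  assumes X: "X \<in> comp p q"
  shows "\<exists>z y. z \<in> D \<and> y \<in> D \<and> (f z = z \<or> g z = z) \<and> (f y = y \<or> g y = y) \<and> z \<noteq> y \<and>
    X = {ext z, ext y} \<and> odd (pos k l (ext z) + pos k l (ext y))"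
proof -
  obtain x where x: "x \<in> D" "X = outer_part (R\<^sup>*``{x})" "X \<noteq> {}" using X comp_eq by auto
  have CD: "R\<^sup>*``{x} \<subseteq> D" using R_D x(1) by auto
  have X': "X = ext ` {v \<in> R\<^sup>*``{x}. f v = v \<or> g v = v}" using outer_eq[OF CD] x(2) by simp
  then obtain z where z: "z \<in> R\<^sup>*``{x}" "f z = z \<or> g z = z" using x(3) by auto
  have zD: "z \<in> D" using z CD by auto
  have ce: "R\<^sup>*``{z} = R\<^sup>*``{x}" using cls_eq[OF z(1)] .
  obtain y where y: "y \<noteq> z" "y \<in> D" "{v \<in> R\<^sup>*``{z}. f v = v \<or> g v = v} = {z,y}"
    "odd (pos k l (ext z) + pos k l (ext y))"
    using block[OF zD z(2)] by blast
  have "f y = y \<or> g y = y" using y(3) by blast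
  moreover have "X = {ext z, ext y}" using X' ce y(3) by simp
  ultimately show ?thesis using zD y z(2) by blast
qed

lemma ext_points: "v \<in> D \<Longrightarrow> f v = v \<or> g v = v \<Longrightarrow> ext v \<in> points k l"
  using ffix gfix D_mem by (auto simp: ext_def)

lemma ext_inj: "v \<in> D \<Longrightarrow> f v = v \<or> g v = v \<Longrightarrow> w \<in> D \<Longrightarrow> f w = w \<or> g w = w \<Longrightarrow>
   ext v = ext w \<Longrightarrow> v = w"
  using ffix gfix by (auto simp: ext_def)

lemma comp_ok: "comp p q \<in> Po_star k l"
proof -
  let ?W = "comp p q"
  have U: "\<Union>?W = points k l"
  proof
    show "\<Union>?W \<subseteq> points k l" using comp_blocks ext_points by blast
  next
    show "points k l \<subseteq> \<Union>?W"
    proof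
      fix w assume w: "w \<in> points k l"
      obtain t where t: "t \<in> D" "w \<in> outer_part (R\<^sup>*``{t})"
      proof (cases w)
        case (Up i)
        hence "TU i \<in> D" using w D_mem by auto
        moreover have "w \<in> outer_part (R\<^sup>*``{TU i})" using Up by (auto simp: outer_part_def)
        ultimately show ?thesis using that by blast
      next
        case (Lo i)
        hence "TL i \<in> D" using w D_mem by auto
        moreover have "w \<in> outer_part (R\<^sup>*``{TL i})" using Lo by (auto simp: outer_part_def)
        ultimately show ?thesis using that by blast
      qed
      hence "outer_part (R\<^sup>*``{t}) \<in> ?W" using comp_eq by auto
      thus "w \<in> \<Union>?W" using t by blast
    qed
  qed
  have dj: "disjoint ?W"
    unfolding pairwise_def disjnt_def
  proof (intro ballI impI)
    fix X Y assume X: "X \<in> ?W" and Y: "Y \<in> ?W" and XY: "X \<noteq> Y"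
    obtain x where x: "x \<in> D" "X = outer_part (R\<^sup>*``{x})" using X comp_eq by auto
    obtain y where y: "y \<in> D" "Y = outer_part (R\<^sup>*``{y})" using Y comp_eq by auto
    show "X \<inter> Y = {}"
    proof (rule ccontr)
      assume "X \<inter> Y \<noteq> {}"
      then obtain t where "t \<in> R\<^sup>*``{x}" "t \<in> R\<^sup>*``{y}"
        using x y unfolding outer_part_def by auto
      hence "R\<^sup>*``{x} = R\<^sup>*``{y}" using cls_eq by metis
      thus False using x y XY by simp
    qed
  qed
  have ne: "{} \<notin> ?W" using comp_eq by auto
  have part: "?W \<in> Part k l" unfolding Part_def partition_on_def using U dj ne by simp
  have pair: "is_pairing ?W"
    unfolding is_pairing_def
  proof
    fix X assume "X \<in> ?W"
    then obtain z y where zy: "z \<in> D" "y \<in> D" "f z = z \<or> g z = z" "f y = y \<or> g y = y" "z \<noteq> y"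
      "X = {ext z, ext y}" using comp_blocks by blast
    have "ext z \<noteq> ext y" using ext_inj zy by blast
    thus "card X = 2" using zy by simp
  qed
  have par: "par_ok k l ?W"
    unfolding par_ok_def
  proof (intro ballI impI)
    fix X a b assume X: "X \<in> ?W" and ab: "a \<in> X" "b \<in> X" "a \<noteq> b"
    then obtain z y where zy: "X = {ext z, ext y}" "odd (pos k l (ext z) + pos k l (ext y))"
      using comp_blocks by blast
    have "(a = ext z \<and> b = ext y) \<or> (a = ext y \<and> b = ext z)" using zy ab by auto
    thus "odd (pos k l a + pos k l b)" using zy(2) by (auto simp: add.commute)
  qed
  show ?thesis using part pair par by (simp add: Po_star_alt)
qed

end

theorem proposition6p5:
  shows "full_category_of_partitions Po_star"
  unfolding full_category_of_partitions_def
proof (intro conjI allI impI)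
  show "Po_star k l \<subseteq> Part k l" for k l by (auto simp: Po_star_def)
  show "tensor k l p q \<in> Po_star (k + k') (l + l')" if "p \<in> Po_star k l" "q \<in> Po_star k' l'"
    for k l k' l' p q using tensor_ok that by blast
  show "comp p q \<in> Po_star k l" if "p \<in> Po_star m l" "q \<in> Po_star k m" for k l m p q
  proof -
    interpret cset k m l p q using that by unfold_locales
    show ?thesis by (rule comp_ok)
  qed
  show "star p \<in> Po_star l k" if "p \<in> Po_star k l" for k l p using star_ok that by blast
  show "id_part \<in> Po_star 1 1" by (rule id_ok)
  show "cap_part \<in> Po_star 0 2" by (rule cap_ok)
qed

end
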